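(* Let $V$ be a finite set and let $A$ be a real symmetric matrix indexed by $V$ that has a perfect elimination ordering, and let $v\in V$. Then $v$ is simplicial in $A$ if and only if there exists a perfect elimination ordering of $A$ having $v$ as its first element.
   Context: A perfect elimination ordering of $A$ is a linear order $\pi$ of $V$ with $A_{yz}\ge\min\{A_{xy},A_{xz}\}$ for all $x,y,z\in V$ with $x<_\pi y<_\pi z$. An element $v$ is simplicial in $A$ if $A_{yz}\ge\min\{A_{vy},A_{vz}\}$ for all distinct $y,z\in V\setminus\{v\}$. *)

theory Defs
  imports Complex_Main
begin

definition sym_matrix_on :: "'a set \<Rightarrow> ('a \<Rightarrow> 'a \<Rightarrow> real) \<Rightarrow> bool" where
  "sym_matrix_on V A \<longleftrightarrow> (\<forall>x\<in>V. \<forall>y\<in>V. A x y = A y x)"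

definition linear_order_of :: "'a set \<Rightarrow> 'a list \<Rightarrow> bool" where
  "linear_order_of V \<pi> \<longleftrightarrow> distinct \<pi> \<and> set \<pi> = V"

definition perfect_elimination_ordering :: "'a set \<Rightarrow> ('a \<Rightarrow> 'a \<Rightarrow> real) \<Rightarrow> 'a list \<Rightarrow> bool" where
  "perfect_elimination_ordering V A \<pi> \<longleftrightarrow> linear_order_of V \<pi> \<and>
     (\<forall>i j k. i < j \<and> j < k \<and> k < length \<pi> \<longrightarrow>
        A (\<pi> ! j) (\<pi> ! k) \<ge> min (A (\<pi> ! i) (\<pi> ! j)) (A (\<pi> ! i) (\<pi> ! k)))"

definition simplicial :: "'a set \<Rightarrow> ('a \<Rightarrow> 'a \<Rightarrow> real) \<Rightarrow> 'a \<Rightarrow> bool" where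
  "simplicial V A v \<longleftrightarrow> (\<forall>y\<in>V - {v}. \<forall>z\<in>V - {v}. y \<noteq> z \<longrightarrow> A y z \<ge> min (A v y) (A v z))"

end

theory Submission
  imports Defs
begin

fun idx :: "'b list \<Rightarrow> 'b \<Rightarrow> nat" where
  "idx [] x = 0"
| "idx (a # xs) x = (if a = x then 0 else Suc (idx xs x))"

lemma idx_lt: "x \<in> set xs \<Longrightarrow> idx xs x < length xs"
  by (induction xs) auto

lemma nth_idx: "x \<in> set xs \<Longrightarrow> xs ! idx xs x = x"
  by (induction xs) auto

lemma idx_nth_id: "distinct xs \<Longrightarrow> i < length xs \<Longrightarrow> idx xs (xs ! i) = i"
proof (induction xs arbitrary: i)
  case (Cons a xs) then show ?case by (cases i) auto
qed simp

lemma idx_eq_iff: "x \<in> set xs \<Longrightarrow> y \<in> set xs \<Longrightarrow> idx xs x = idx xs y \<longleftrightarrow> x = y"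
  by (metis nth_idx)

lemma peo_index:
  assumes "distinct \<pi>"
  shows "(\<forall>i j k. i < j \<and> j < k \<and> k < length \<pi> \<longrightarrow>
        A (\<pi> ! j) (\<pi> ! k) \<ge> min (A (\<pi> ! i) (\<pi> ! j)) (A (\<pi> ! i) (\<pi> ! k)))
     \<longleftrightarrow> (\<forall>x\<in>set \<pi>. \<forall>y\<in>set \<pi>. \<forall>z\<in>set \<pi>. idx \<pi> x < idx \<pi> y \<and> idx \<pi> y < idx \<pi> z
        \<longrightarrow> A y z \<ge> min (A x y) (A x z))"
  (is "?L \<longleftrightarrow> ?R")
proof
  assume L: ?L
  show ?R
  proof (intro ballI impI)
    fix x y z assume "x \<in> set \<pi>" "y \<in> set \<pi>" "z \<in> set \<pi>"
      "idx \<pi> x < idx \<pi> y \<and> idx \<pi> y < idx \<pi> z"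
    thus "A y z \<ge> min (A x y) (A x z)"
      using L[rule_format, of "idx \<pi> x" "idx \<pi> y" "idx \<pi> z"]
      by (simp add: nth_idx idx_lt)
  qed
next
  assume R: ?R
  show ?L
  proof (intro allI impI)
    fix i j k assume h: "i < j \<and> j < k \<and> k < length \<pi>"
    thus "A (\<pi> ! j) (\<pi> ! k) \<ge> min (A (\<pi> ! i) (\<pi> ! j)) (A (\<pi> ! i) (\<pi> ! k))"
      using R[rule_format, of "\<pi>!i" "\<pi>!j" "\<pi>!k"] assms
      by (simp add: idx_nth_id)
  qed
qed

lemma filter_index_mono:
  "x \<in> set xs \<Longrightarrow> y \<in> set xs \<Longrightarrow> P x \<Longrightarrow> P y \<Longrightarrow>
   idx (filter P xs) x < idx (filter P xs) y \<Longrightarrow> idx xs x < idx xs y"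
  by (induction xs) (auto split: if_splits)

theorem lemma2:
  fixes V :: "'a set" and A :: "'a \<Rightarrow> 'a \<Rightarrow> real" and v :: 'a
  assumes "finite V"
    and "sym_matrix_on V A"
    and "\<exists>\<pi>. perfect_elimination_ordering V A \<pi>"
    and "v \<in> V"
  shows "simplicial V A v \<longleftrightarrow> (\<exists>\<pi>. perfect_elimination_ordering V A \<pi> \<and> hd \<pi> = v)"
proof
  assume s: "simplicial V A v"
  obtain \<pi> where p: "perfect_elimination_ordering V A \<pi>" using assms(3) by blast
  define \<sigma> where "\<sigma> = v # filter (\<lambda>x. x \<noteq> v) \<pi>"
  have d\<pi>: "distinct \<pi>" and s\<pi>: "set \<pi> = V"
    using p by (auto simp: perfect_elimination_ordering_def linear_order_of_def)
  have R\<pi>: "\<forall>x\<in>set \<pi>. \<forall>y\<in>set \<pi>. \<forall>z\<in>set \<pi>. idx \<pi> x < idx \<pi> y \<and> idx \<pi> y < idx \<pi> z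
        \<longrightarrow> A y z \<ge> min (A x y) (A x z)"
    using p peo_index[OF d\<pi>, of A] by (simp add: perfect_elimination_ordering_def)
  have d\<sigma>: "distinct \<sigma>" and s\<sigma>: "set \<sigma> = V"
    using d\<pi> s\<pi> assms(4) by (auto simp: \<sigma>_def)
  have "\<forall>x\<in>set \<sigma>. \<forall>y\<in>set \<sigma>. \<forall>z\<in>set \<sigma>. idx \<sigma> x < idx \<sigma> y \<and> idx \<sigma> y < idx \<sigma> z
        \<longrightarrow> A y z \<ge> min (A x y) (A x z)"
  proof (intro ballI impI)
    fix x y z assume xyz: "x \<in> set \<sigma>" "y \<in> set \<sigma>" "z \<in> set \<sigma>"
      and o: "idx \<sigma> x < idx \<sigma> y \<and> idx \<sigma> y < idx \<sigma> z"
    have yz: "y \<noteq> v" "z \<noteq> v" "y \<noteq> z" using o by (auto simp: \<sigma>_def)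
    show "A y z \<ge> min (A x y) (A x z)"
    proof (cases "x = v")
      case True
      then show ?thesis using s yz xyz s\<sigma> by (auto simp: simplicial_def)
    next
      case False
      let ?f = "filter (\<lambda>x. x \<noteq> v) \<pi>"
      have "idx ?f x < idx ?f y" "idx ?f y < idx ?f z"
        using o False yz by (auto simp: \<sigma>_def)
      moreover have "x \<in> set \<pi>" "y \<in> set \<pi>" "z \<in> set \<pi>" using xyz s\<sigma> s\<pi> by auto
      ultimately have "idx \<pi> x < idx \<pi> y" "idx \<pi> y < idx \<pi> z"
        using filter_index_mono[of _ \<pi> _ "\<lambda>x. x \<noteq> v"] False yz by auto
      then show ?thesis using R\<pi> \<open>x \<in> set \<pi>\<close> \<open>y \<in> set \<pi>\<close> \<open>z \<in> set \<pi>\<close> by blast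
    qed
  qed
  hence "perfect_elimination_ordering V A \<sigma>"
    using peo_index[OF d\<sigma>, of A] d\<sigma> s\<sigma>
    by (simp add: perfect_elimination_ordering_def linear_order_of_def)
  thus "\<exists>\<pi>. perfect_elimination_ordering V A \<pi> \<and> hd \<pi> = v" by (auto simp: \<sigma>_def)
next
  assume "\<exists>\<pi>. perfect_elimination_ordering V A \<pi> \<and> hd \<pi> = v"
  then obtain \<pi> where p: "perfect_elimination_ordering V A \<pi>" and h: "hd \<pi> = v" by blast
  have d\<pi>: "distinct \<pi>" and s\<pi>: "set \<pi> = V"
    using p by (auto simp: perfect_elimination_ordering_def linear_order_of_def)
  have R\<pi>: "\<forall>x\<in>set \<pi>. \<forall>y\<in>set \<pi>. \<forall>z\<in>set \<pi>. idx \<pi> x < idx \<pi> y \<and> idx \<pi> y < idx \<pi> z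
        \<longrightarrow> A y z \<ge> min (A x y) (A x z)"
    using p peo_index[OF d\<pi>, of A] by (simp add: perfect_elimination_ordering_def)
  have ne: "\<pi> \<noteq> []" using s\<pi> assms(4) by auto
  have iv: "idx \<pi> v = 0" using ne h by (cases \<pi>) auto
  have pos: "idx \<pi> w > 0" if "w \<in> V" "w \<noteq> v" for w
    using ne h that by (cases \<pi>) auto
  have idx_inj: "idx \<pi> y \<noteq> idx \<pi> z" if "y \<in> V" "z \<in> V" "y \<noteq> z" for y z
    using that s\<pi> by (metis idx_eq_iff)
  show "simplicial V A v" unfolding simplicial_def
  proof (intro ballI impI)
    fix y z assume y: "y \<in> V - {v}" and z: "z \<in> V - {v}" and yz: "y \<noteq> z"
    have sym: "A y z = A z y" "A v y = A y v" "A v z = A z v"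
      using assms(2) y z assms(4) by (auto simp: sym_matrix_on_def)
    have py: "idx \<pi> y > 0" and pz: "idx \<pi> z > 0" using pos y z by auto
    consider "idx \<pi> y < idx \<pi> z" | "idx \<pi> z < idx \<pi> y"
      using idx_inj y z yz by (meson DiffD1 linorder_neqE_nat)
    then show "A y z \<ge> min (A v y) (A v z)"
    proof cases
      case 1 then show ?thesis using R\<pi> y z assms(4) s\<pi> iv py by auto
    next
      case 2
      then have "A z y \<ge> min (A v z) (A v y)" using R\<pi> y z assms(4) s\<pi> iv pz by auto
      then show ?thesis using sym by linarith
    qed
  qed
qed

end
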